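(* Let $0<p<1$, let $\epsilon_1,\epsilon_2,\dots$ be i.i.d. $\mathrm{Bernoulli}(p)$ random variables, and let $Y_i=\begin{pmatrix}\epsilon_i&1\\1&0\end{pmatrix}$, $S_n=Y_nY_{n-1}\cdots Y_1$. Then the top Lyapunov exponent $\lambda(p)=\lim_{n\to\infty}\frac1n\mathbb{E}[\log\|S_n\|]$ satisfies \[ \frac{p\log 3}{4-p}\le \lambda(p)\le \frac{p\log 3}{2}. \]
   Context: $\mathrm{Bernoulli}(p)$ means $\mathbb{P}(\epsilon=1)=p$, $\mathbb{P}(\epsilon=0)=1-p$. $\|\cdot\|$ is any matrix norm (the limit is independent of the choice). It is known that $\lambda(p)=\mathbb{E}[\log X_p]$, where $X_p$ is a $(0,\infty)$-valued random variable with atomless law, uniquely determined by $X_p\sim\frac1{X_p}+\epsilon$ with $\epsilon\sim\mathrm{Bernoulli}(p)$ independent of $X_p$. *)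

theory Defs
  imports "HOL-Analysis.Analysis"
begin

definition Ymat :: "bool \<Rightarrow> real^2^2" where
  "Ymat e = (\<chi> i j. if i = 1 \<and> j = 1 then (if e then 1 else 0)
                     else if i = 2 \<and> j = 2 then 0 else 1)"

text \<open>For es = [eps_1, ..., eps_n], Sprod es = Y_n ** ... ** Y_1.\<close>
definition Sprod :: "bool list \<Rightarrow> real^2^2" where
  "Sprod es = foldl (\<lambda>M e. Ymat e ** M) (mat 1) es"

definition bern_weight :: "real \<Rightarrow> bool list \<Rightarrow> real" where
  "bern_weight p es = (\<Prod>e\<leftarrow>es. if e then p else 1 - p)"

text \<open>E[log ||S_n||] for i.i.d. Bernoulli(p) eps_1..eps_n (finite expectation);
  the norm on real^2^2 is the Frobenius norm.\<close>
definition exp_log_norm :: "real \<Rightarrow> nat \<Rightarrow> real" where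
  "exp_log_norm p n = (\<Sum>es \<in> {es::bool list. length es = n}.
                         bern_weight p es * ln (norm (Sprod es)))"

end

theory Submission
  imports Defs
begin


definition E :: "real \<Rightarrow> nat \<Rightarrow> (bool list \<Rightarrow> real) \<Rightarrow> real" where
  "E p n f = (\<Sum>es \<in> {es::bool list. length es = n}. bern_weight p es * f es)"

lemma fin_len: "finite {es::bool list. length es = n}"
  using finite_lists_length_eq[where A="UNIV :: bool set"] by simp

lemma bw_append: "bern_weight p (xs @ ys) = bern_weight p xs * bern_weight p ys"
  by (simp add: bern_weight_def)

lemma len_split: "{es::bool list. length es = m + n} =
   (\<lambda>(xs,ys). xs @ ys) ` ({xs. length xs = m} \<times> {ys. length ys = n})"
proof
  show "{es::bool list. length es = m + n} \<subseteq> (\<lambda>(xs,ys). xs @ ys) ` ({xs. length xs = m} \<times> {ys. length ys = n})"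
  proof
    fix es :: "bool list" assume "es \<in> {es. length es = m + n}"
    then have "es = (\<lambda>(xs,ys). xs @ ys) (take m es, drop m es)" "(take m es, drop m es) \<in> {xs. length xs = m} \<times> {ys. length ys = n}"
      by auto
    then show "es \<in> (\<lambda>(xs,ys). xs @ ys) ` ({xs. length xs = m} \<times> {ys. length ys = n})" by blast
  qed
qed auto

lemma inj_app: "inj_on (\<lambda>(xs::bool list,ys). xs @ ys) ({xs. length xs = m} \<times> {ys. length ys = n})"
  by (auto simp: inj_on_def)

lemma E_add: "E p (m + n) f = E p m (\<lambda>xs. E p n (\<lambda>ys. f (xs @ ys)))"
proof -
  have "E p (m + n) f = (\<Sum>z \<in> {xs. length xs = m} \<times> {ys. length ys = n}.
          bern_weight p (fst z @ snd z) * f (fst z @ snd z))"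
    unfolding E_def len_split by (subst sum.reindex[OF inj_app]) (simp add: case_prod_beta)
  also have "\<dots> = (\<Sum>xs \<in> {xs. length xs = m}. \<Sum>ys \<in> {ys. length ys = n}.
          bern_weight p (xs @ ys) * f (xs @ ys))"
    unfolding sum.cartesian_product by (simp add: case_prod_beta)
  also have "\<dots> = E p m (\<lambda>xs. E p n (\<lambda>ys. f (xs @ ys)))"
    unfolding E_def by (simp add: bw_append sum_distrib_left mult.assoc)
  finally show ?thesis .
qed

lemma len1: "{es::bool list. length es = Suc 0} = {[True],[False]}"
  by (auto simp: length_Suc_conv)

lemma E_one: "E p (Suc 0) f = p * f [True] + (1 - p) * f [False]"
  by (simp add: E_def len1 bern_weight_def)

lemma E_Suc: "E p (Suc n) f = E p n (\<lambda>xs. p * f (xs @ [True]) + (1 - p) * f (xs @ [False]))"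
  using E_add[of p n 1 f] by (simp add: E_one)

lemma E_zero: "E p 0 f = f []"
  by (simp add: E_def bern_weight_def)

lemma bw_nonneg: "0 \<le> p \<Longrightarrow> p \<le> 1 \<Longrightarrow> 0 \<le> bern_weight p es"
  unfolding bern_weight_def by (induction es) auto

lemma E_mono: "0 \<le> p \<Longrightarrow> p \<le> 1 \<Longrightarrow> (\<And>es. f es \<le> g es) \<Longrightarrow> E p n f \<le> E p n g"
  unfolding E_def by (intro sum_mono mult_left_mono) (auto simp: bw_nonneg)

lemma E_plus_const: "E p n (\<lambda>es. f es + c) = E p n f + c * E p n (\<lambda>_. 1)"
  unfolding E_def by (simp add: distrib_left sum.distrib sum_distrib_left mult.commute)

lemma E_const1: "E p n (\<lambda>_. 1) = 1"
proof (induction n)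
  case 0 then show ?case by (simp add: E_zero)
next
  case (Suc n) then show ?case by (simp add: E_Suc)
qed

lemma E_const: "E p n (\<lambda>_. c) = c"
  using E_plus_const[of p n "\<lambda>_. 0" c] by (simp add: E_const1 E_def)

lemma E_add_fun: "E p n (\<lambda>es. f es + g es) = E p n f + E p n g"
  unfolding E_def by (simp add: distrib_left sum.distrib)

lemma drift_lower:
  assumes "0 \<le> p" "p \<le> 1"
    and "\<And>es. p * f (es @ [True]) + (1 - p) * f (es @ [False]) \<ge> f es + c"
  shows "E p n f \<ge> f [] + real n * c"
proof (induction n)
  case 0 then show ?case by (simp add: E_zero)
next
  case (Suc n)
  have "E p (Suc n) f \<ge> E p n (\<lambda>es. f es + c)"
    unfolding E_Suc by (rule E_mono) (use assms in auto)
  also have "E p n (\<lambda>es. f es + c) = E p n f + c" by (simp add: E_plus_const E_const1)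
  finally show ?case using Suc by (simp add: algebra_simps)
qed

lemma drift_upper:
  assumes "0 \<le> p" "p \<le> 1"
    and "\<And>es. p * f (es @ [True]) + (1 - p) * f (es @ [False]) \<le> f es + c"
  shows "E p n f \<le> f [] + real n * c"
proof (induction n)
  case 0 then show ?case by (simp add: E_zero)
next
  case (Suc n)
  have "E p (Suc n) f \<le> E p n (\<lambda>es. f es + c)"
    unfolding E_Suc by (rule E_mono) (use assms in auto)
  also have "E p n (\<lambda>es. f es + c) = E p n f + c" by (simp add: E_plus_const E_const1)
  finally show ?case using Suc by (simp add: algebra_simps)
qed



lemma norm22: "norm (M::real^2^2) = sqrt ((M$1$1)^2 + (M$1$2)^2 + (M$2$1)^2 + (M$2$2)^2)"
  by (simp add: norm_vec_def L2_set_def sum_2 real_sqrt_mult[symmetric] add.assoc)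
lemma Y_entries: "(Ymat e ** M) $ 1 $ j = (if e then M$1$j else 0) + M$2$j"
   "(Ymat e ** M) $ 2 $ j = M$1$j"
  by (simp_all add: Ymat_def matrix_matrix_mult_def sum_2)

lemma mult_entries: "((A::real^2^2) ** B) $ i $ j = A$i$1 * B$1$j + A$i$2 * B$2$j"
  by (simp add: matrix_matrix_mult_def sum_2)

lemma foldl_S: "foldl (\<lambda>M e. Ymat e ** M) (M0::real^2^2) ys = Sprod ys ** M0"
proof (induction ys arbitrary: M0)
  case Nil then show ?case by (simp add: Sprod_def matrix_mul_lid)
next
  case (Cons y ys)
  have "Sprod (y # ys) = Sprod ys ** Ymat y"
    using Cons[of "Ymat y ** mat 1"] by (simp add: Sprod_def matrix_mul_rid)
  then show ?case using Cons[of "Ymat y ** M0"] by (simp add: matrix_mul_assoc)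
qed

lemma Sprod_append: "Sprod (xs @ ys) = Sprod ys ** Sprod xs"
  using foldl_S[of "Sprod xs" ys] by (simp add: Sprod_def)

lemma Sprod_snoc: "Sprod (es @ [e]) = Ymat e ** Sprod es"
  by (simp add: Sprod_def)

lemma Sprod_nonneg: "0 \<le> Sprod es $ i $ j"
proof (induction es arbitrary: i j rule: rev_induct)
  case Nil then show ?case by (simp add: Sprod_def mat_def)
next
  case (snoc e es)
  then show ?case using exhaust_2[of i] by (auto simp: Sprod_snoc Y_entries)
qed

definition ra :: "real^2^2 \<Rightarrow> real" where "ra M = M$1$1 + M$1$2"
definition rb :: "real^2^2 \<Rightarrow> real" where "rb M = M$2$1 + M$2$2"

lemma ra_Y: "ra (Ymat True ** M) = ra M + rb M" "ra (Ymat False ** M) = rb M"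
  and rb_Y: "rb (Ymat e ** M) = ra M"
  by (simp_all add: ra_def rb_def Y_entries)

lemma Sprod_pos: "0 < ra (Sprod es) \<and> 0 < rb (Sprod es)"
proof (induction es rule: rev_induct)
  case Nil then show ?case by (simp add: Sprod_def mat_def ra_def rb_def)
next
  case (snoc e es)
  then show ?case by (cases e) (auto simp: Sprod_snoc ra_Y rb_Y)
qed

lemma poly_cs: "((a11::real)^2 + a12^2 + a21^2 + a22^2) * (b11^2 + b12^2 + b21^2 + b22^2)
   - ((a11*b11 + a12*b21)^2 + (a11*b12 + a12*b22)^2 + (a21*b11 + a22*b21)^2 + (a21*b12 + a22*b22)^2)
   = (a11*b21 - a12*b11)^2 + (a11*b22 - a12*b12)^2 + (a21*b21 - a22*b11)^2 + (a21*b22 - a22*b12)^2"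
  by (simp add: power2_eq_square algebra_simps)

lemma le_from_sq: "(X::real) - Y = a^2 + b^2 + c^2 + d^2 \<Longrightarrow> Y \<le> X"
proof -
  assume h: "X - Y = a^2 + b^2 + c^2 + d^2"
  have "0 \<le> a^2 + b^2 + c^2 + d^2" by simp
  then show ?thesis using h by linarith
qed

lemma norm_mult_le: "norm ((A::real^2^2) ** (B::real^2^2)) \<le> norm A * norm B"
proof -
  have "norm A * norm B = sqrt (((A$1$1)^2 + (A$1$2)^2 + (A$2$1)^2 + (A$2$2)^2) *
          ((B$1$1)^2 + (B$1$2)^2 + (B$2$1)^2 + (B$2$2)^2))"
    by (simp add: norm22 real_sqrt_mult)
  moreover have "((A ** B)$1$1)^2 + ((A ** B)$1$2)^2 + ((A ** B)$2$1)^2 + ((A ** B)$2$2)^2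
      \<le> ((A$1$1)^2 + (A$1$2)^2 + (A$2$1)^2 + (A$2$2)^2) *
          ((B$1$1)^2 + (B$1$2)^2 + (B$2$1)^2 + (B$2$2)^2)"
    using poly_cs[of "A$1$1" "A$1$2" "A$2$1" "A$2$2" "B$1$1" "B$1$2" "B$2$1" "B$2$2"]
    unfolding mult_entries by (rule le_from_sq)
  ultimately show ?thesis by (simp add: norm22)
qed

lemma norm_Y0: "norm (Ymat False ** (M::real^2^2)) = norm M"
  by (simp add: norm22 Y_entries add_ac)

lemma norm_Y1: "norm (Ymat True ** (M::real^2^2)) \<le> sqrt 3 * norm M"
proof -
  have "sqrt 3 * norm M = sqrt (3 * ((M$1$1)^2 + (M$1$2)^2 + (M$2$1)^2 + (M$2$2)^2))"
    unfolding norm22 by (rule real_sqrt_mult[symmetric])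
  moreover have "(M$1$1 + M$2$1)^2 + (M$1$2 + M$2$2)^2 + (M$1$1)^2 + (M$1$2)^2
      \<le> 3 * ((M$1$1)^2 + (M$1$2)^2 + (M$2$1)^2 + (M$2$2)^2)"
  proof -
    have "3 * ((M$1$1)^2 + (M$1$2)^2 + (M$2$1)^2 + (M$2$2)^2) -
       ((M$1$1 + M$2$1)^2 + (M$1$2 + M$2$2)^2 + (M$1$1)^2 + (M$1$2)^2)
       = (M$1$1 - M$2$1)^2 + (M$2$1)^2 + (M$1$2 - M$2$2)^2 + (M$2$2)^2"
      by (simp add: power2_eq_square algebra_simps)
    then show ?thesis by (rule le_from_sq)
  qed
  ultimately show ?thesis by (simp add: norm22 Y_entries)
qed

lemma rab_le_norm: "ra (M::real^2^2) + rb M \<le> 4 * norm M"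
  unfolding ra_def rb_def
  using component_le_norm_cart[of "M$1" 1] component_le_norm_cart[of "M$1" 2]
    component_le_norm_cart[of "M$2" 1] component_le_norm_cart[of "M$2" 2]
    Finite_Cartesian_Product.norm_nth_le[of M 1] Finite_Cartesian_Product.norm_nth_le[of M 2]
  by linarith



definition kap :: "real \<Rightarrow> real" where "kap p = p / (4 - p)"
definition zz :: "real \<Rightarrow> real" where "zz p = 2 / (3 * (4 - p)) - 1/4"
definition H :: "real \<Rightarrow> real \<Rightarrow> real" where
  "H p r = (if r < 1/2 then 0 else if r < 1 then 2 * kap p / 3 - zz p
            else if r \<le> 2 then kap p - zz p else kap p)"

lemma ln43: "ln 3 / 4 \<le> ln (4/3::real)"
proof -
  have "ln (3::real) \<le> ln ((4/3)^4)" by (subst ln_le_cancel_iff) (auto simp: power_divide)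
  then show ?thesis by (simp add: ln_realpow)
qed

lemma ln32: "ln 3 / 3 \<le> ln (3/2::real)"
proof -
  have "ln (3::real) \<le> ln ((3/2)^3)" by (subst ln_le_cancel_iff) (auto simp: power_divide)
  then show ?thesis by (simp add: ln_realpow)
qed

lemma ln53: "9 * ln 3 / 20 \<le> ln (5/3::real)"
proof -
  have "ln ((3::real)^9) \<le> ln ((5/3)^20)" by (subst ln_le_cancel_iff) (auto simp: power_divide)
  moreover have "ln ((3::real)^9) = 9 * ln 3" "ln ((5/3::real)^20) = 20 * ln (5/3)"
    by (subst ln_realpow; simp)+
  ultimately show ?thesis by linarith
qed

lemma combine:
  fixes p L G X k lr lq :: real
  assumes "G * L \<le> lq" "lq \<le> lr" "0 \<le> p" "0 < L" "k \<le> p * G + X"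
  shows "L * k \<le> p * lr + L * X"
proof -
  have "p * (G * L) \<le> p * lr" using assms by (intro mult_left_mono) auto
  moreover have "L * k \<le> L * (p * G + X)" using assms by (intro mult_left_mono) auto
  moreover have "L * (p * G + X) = p * (G * L) + L * X" by (simp add: algebra_simps)
  ultimately show ?thesis by linarith
qed

lemma key:
  fixes p a b :: real
  assumes p: "0 < p" "p < 1" and ab: "0 < a" "0 < b"
  shows "ln 3 * kap p \<le> p * ln ((2*a+b)/(a+b)) +
     ln 3 * (p * H p ((a+b)/a) + (1-p) * H p (b/a) - H p (a/b))"
proof -
  have L: "0 < (ln 3::real)" by simp
  have d: "0 < 4 - p" using p by simp
  consider "2*a < b" | "2*a \<ge> b" "a < b" | "a = b" | "b < a" "a \<le> 2*b" | "2*b < a" by linarith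
  then show ?thesis
  proof cases
    case 1
    have hs: "H p ((a+b)/a) = kap p" "H p (b/a) = kap p" "H p (a/b) = 0"
      using 1 ab by (auto simp: H_def field_simps)
    have "0 \<le> ln ((2*a+b)/(a+b))" using ab by simp
    then have "0 \<le> p * ln ((2*a+b)/(a+b))" using p by simp
    moreover have e: "p * kap p + (1-p) * kap p - 0 = kap p" by (simp add: algebra_simps)
    ultimately show ?thesis unfolding hs e by linarith
  next
    case 2
    have hs: "H p ((a+b)/a) = kap p" "H p (b/a) = kap p - zz p" "H p (a/b) = 2 * kap p / 3 - zz p"
      using 2 ab by (auto simp: H_def field_simps)
    have r: "ln (4/3) \<le> ln ((2*a+b)/(a+b))" using 2 ab by (subst ln_le_cancel_iff) (auto simp: field_simps)
    have pz: "p * zz p = 2 * kap p / 3 - p / 4" using d by (simp add: kap_def zz_def field_simps)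
    have "p * (1/4) + (p * kap p + (1-p) * (kap p - zz p) - (2 * kap p / 3 - zz p)) = p/4 + kap p / 3 + p * zz p"
      by (simp add: algebra_simps)
    then have ar: "kap p \<le> p * (1/4) + (p * kap p + (1-p) * (kap p - zz p) - (2 * kap p / 3 - zz p))"
      using pz by linarith
    show ?thesis unfolding hs
      by (rule combine[OF _ r less_imp_le[OF p(1)] L ar]) (use ln43 in simp)
  next
    case 3
    have hs: "H p ((a+b)/a) = kap p - zz p" "H p (b/a) = kap p - zz p" "H p (a/b) = kap p - zz p"
      using 3 ab by (auto simp: H_def field_simps)
    have r: "ln (3/2) \<le> ln ((2*a+b)/(a+b))" using 3 ab by (subst ln_le_cancel_iff) (auto simp: field_simps)
    have z: "p * (kap p - zz p) + (1-p) * (kap p - zz p) - (kap p - zz p) = 0" by (simp add: algebra_simps)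
    have "kap p \<le> p / 3" using d p by (simp add: kap_def field_simps)
    then have ar: "kap p \<le> p * (1/3) + (p * (kap p - zz p) + (1-p) * (kap p - zz p) - (kap p - zz p))"
      unfolding z by simp
    show ?thesis unfolding hs
      by (rule combine[OF _ r less_imp_le[OF p(1)] L ar]) (use ln32 in simp)
  next
    case 4
    have hs: "H p ((a+b)/a) = kap p - zz p" "H p (b/a) = 2 * kap p / 3 - zz p" "H p (a/b) = kap p - zz p"
      using 4 ab by (auto simp: H_def field_simps)
    have r: "ln (3/2) \<le> ln ((2*a+b)/(a+b))" using 4 ab by (subst ln_le_cancel_iff) (auto simp: field_simps)
    have z: "p * (1/3) + (p * (kap p - zz p) + (1-p) * (2 * kap p / 3 - zz p) - (kap p - zz p)) = p/3 + p * kap p / 3 - kap p / 3"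
      by (simp add: field_simps)
    have "kap p * (4 - p) = p" using d by (simp add: kap_def)
    then have "4 * kap p - p * kap p = p" by (simp add: algebra_simps)
    then have ar: "kap p \<le> p * (1/3) + (p * (kap p - zz p) + (1-p) * (2 * kap p / 3 - zz p) - (kap p - zz p))"
      unfolding z by linarith
    show ?thesis unfolding hs
      by (rule combine[OF _ r less_imp_le[OF p(1)] L ar]) (use ln32 in simp)
  next
    case 5
    have hs: "H p ((a+b)/a) = kap p - zz p" "H p (b/a) = 0" "H p (a/b) = kap p"
      using 5 ab by (auto simp: H_def field_simps)
    have r: "ln (5/3) \<le> ln ((2*a+b)/(a+b))" using 5 ab by (subst ln_le_cancel_iff) (auto simp: field_simps)
    have pz: "p * zz p = 2 * kap p / 3 - p / 4" using d by (simp add: kap_def zz_def field_simps)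
    have z: "p * (9/20) + (p * (kap p - zz p) + (1-p) * 0 - kap p) = 9*p/20 + p * kap p - p * zz p - kap p"
      by (simp add: algebra_simps)
    have "kap p * (4 - p) = p" using d by (simp add: kap_def)
    then have k4: "4 * kap p - p * kap p = p" by (simp add: algebra_simps)
    have "p / 4 \<le> kap p" using d p by (simp add: kap_def field_simps)
    then have ar: "kap p \<le> p * (9/20) + (p * (kap p - zz p) + (1-p) * 0 - kap p)"
      unfolding z pz using k4 p by linarith
    show ?thesis unfolding hs
      by (rule combine[OF _ r less_imp_le[OF p(1)] L ar]) (use ln53 in simp)
  qed
qed



lemma fekete:
  fixes a :: "nat \<Rightarrow> real"
  assumes sub: "\<And>m n. a (m + n) \<le> a m + a n"
    and lb: "\<And>n. n \<ge> 1 \<Longrightarrow> B \<le> a n / real n"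
  shows "convergent (\<lambda>n. a n / real n)"
proof -
  define S where "S = (\<lambda>n. a n / real n) ` {1..}"
  define L where "L = Inf S"
  have Sne: "S \<noteq> {}" unfolding S_def by auto
  have bdd: "bdd_below S" unfolding S_def using lb by (auto intro!: bdd_belowI[of _ B])
  have Lle: "L \<le> a n / real n" if "n \<ge> 1" for n
    unfolding L_def by (rule cInf_lower[OF _ bdd]) (use that in \<open>auto simp: S_def\<close>)
  have iter: "a (q * m + i) \<le> real q * a m + a i" for q m i
  proof (induction q)
    case 0 then show ?case by simp
  next
    case (Suc q)
    have "a (Suc q * m + i) = a (m + (q * m + i))" by (simp add: add.assoc)
    also have "\<dots> \<le> a m + a (q * m + i)" by (rule sub)
    finally show ?case using Suc by (simp add: algebra_simps)
  qed
  have "(\<lambda>n. a n / real n) \<longlonglongrightarrow> L"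
    unfolding LIMSEQ_iff
  proof (intro allI impI)
    fix r :: real assume r: "r > 0"
    have "Inf S < L + r/2" using r unfolding L_def by simp
    then obtain m where m: "m \<ge> 1" "a m / real m < L + r/2"
      using cInf_less_iff[OF Sne bdd] unfolding S_def by auto
    define K where "K = (\<Sum>i<m. \<bar>a i\<bar>)"
    have K: "a i \<le> K" if "i < m" for i
    proof -
      have "\<bar>a i\<bar> \<le> K" unfolding K_def
        by (rule member_le_sum[of i "{..<m}" "\<lambda>i. \<bar>a i\<bar>", simplified]) (use that in auto)
      then show ?thesis by simp
    qed
    define C where "C = \<bar>a m\<bar> + K"
    have mpos: "real m > 0" using m by simp
    have bound: "a n \<le> real n * (a m / real m) + C" for n
    proof -
      define q where "q = n div m"
      define i where "i = n mod m"
      have n: "n = q * m + i" unfolding q_def i_def by simp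
      have im: "i < m" unfolding i_def using m by simp
      have "a n \<le> real q * a m + a i" using iter[of q m i] n by simp
      also have "real q * a m = real n * (a m / real m) - real i * (a m / real m)"
        using mpos by (simp add: n field_simps)
      also have "- (real i * (a m / real m)) \<le> \<bar>a m\<bar>"
      proof -
        have "\<bar>real i * (a m / real m)\<bar> = (real i / real m) * \<bar>a m\<bar>"
          using mpos by (simp add: abs_mult)
        also have "\<dots> \<le> 1 * \<bar>a m\<bar>" using im mpos by (intro mult_right_mono) auto
        finally show ?thesis by linarith
      qed
      then have "real n * (a m / real m) - real i * (a m / real m) + a i \<le> real n * (a m / real m) + C"
        using K[OF im] unfolding C_def by linarith
      finally show ?thesis .
    qed
    have C0: "C \<ge> 0" unfolding C_def K_def by (auto intro: sum_nonneg)
    obtain N :: nat where N: "real N > 2 * C / r" using reals_Archimedean2 by blast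
    show "\<exists>no. \<forall>n\<ge>no. norm (a n / real n - L) < r"
    proof (intro exI allI impI)
      fix n assume nN: "n \<ge> max 1 N"
      then have n1: "n \<ge> 1" by simp
      have npos: "real n > 0" using n1 by simp
      have "a n / real n \<le> a m / real m + C / real n"
        using bound[of n] npos by (simp add: field_simps)
      moreover have "C / real n < r / 2"
      proof -
        have "2 * C / r < real n" using N nN by simp
        then have "2 * C < r * real n" using r by (simp add: field_simps)
        then show ?thesis using npos by (simp add: field_simps)
      qed
      ultimately have "a n / real n < L + r" using m by linarith
      moreover have "L \<le> a n / real n" using Lle[OF n1] .
      ultimately show "norm (a n / real n - L) < r" using r by simp
    qed
  qed
  then show ?thesis unfolding convergent_def by blast
qed


definition Pot :: "real \<Rightarrow> real^2^2 \<Rightarrow> real" where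
  "Pot p M = ln (ra M + rb M) + ln 3 * H p (ra M / rb M)"

lemma drift_ab:
  fixes p a b :: real
  assumes p: "0 < p" "p < 1" and ab: "0 < a" "0 < b"
  shows "ln (a+b) + ln 3 * H p (a/b) + ln 3 * kap p \<le>
    p * (ln ((a+b)+a) + ln 3 * H p ((a+b)/a)) + (1-p) * (ln (b+a) + ln 3 * H p (b/a))"
proof -
  have e0: "(a+b)+a = 2*a+b" by simp
  have "ln ((2*a+b)/(a+b)) = ln (2*a+b) - ln (a+b)" using ab by (intro ln_divide_pos) auto
  then have e1: "ln ((a+b)+a) = ln ((2*a+b)/(a+b)) + ln (a+b)" unfolding e0 by simp
  have e2: "b + a = a + b" by simp
  have k: "ln 3 * kap p \<le> p * ln ((2*a+b)/(a+b)) +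
     ln 3 * (p * H p ((a+b)/a) + (1-p) * H p (b/a) - H p (a/b))" by (rule key[OF p ab])
  have "p * (ln ((a+b)+a) + ln 3 * H p ((a+b)/a)) + (1-p) * (ln (b+a) + ln 3 * H p (b/a))
     - (ln (a+b) + ln 3 * H p (a/b)) = p * ln ((2*a+b)/(a+b)) +
     ln 3 * (p * H p ((a+b)/a) + (1-p) * H p (b/a) - H p (a/b))"
    unfolding e1 e2 by (simp add: algebra_simps)
  then show ?thesis using k by linarith
qed

lemma drift_Pot:
  assumes p: "0 < p" "p < 1"
  shows "Pot p (Sprod es) + ln 3 * kap p \<le>
     p * Pot p (Sprod (es @ [True])) + (1 - p) * Pot p (Sprod (es @ [False]))"
  using drift_ab[OF p, of "ra (Sprod es)" "rb (Sprod es)"] Sprod_pos[of es]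
  by (simp add: Pot_def Sprod_snoc ra_Y rb_Y)

definition Hb :: "real \<Rightarrow> real" where "Hb p = kap p + \<bar>zz p\<bar>"

lemma H_le: "0 < p \<Longrightarrow> p < 1 \<Longrightarrow> H p r \<le> Hb p"
proof -
  assume p: "0 < p" "p < 1"
  have "0 \<le> kap p" using p by (simp add: kap_def)
  then show ?thesis unfolding H_def Hb_def by auto
qed

lemma ln_norm_ge_Pot:
  assumes p: "0 < p" "p < 1"
  shows "Pot p (Sprod es) - ln 4 - ln 3 * Hb p \<le> ln (norm (Sprod es))"
proof -
  let ?M = "Sprod es"
  have pos: "0 < ra ?M + rb ?M" using Sprod_pos[of es] by simp
  have "ln (ra ?M + rb ?M) \<le> ln (4 * norm ?M)"
    using pos rab_le_norm[of ?M] by (subst ln_le_cancel_iff) auto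
  also have "\<dots> = ln 4 + ln (norm ?M)"
    using pos rab_le_norm[of ?M] by (subst ln_mult) auto
  finally have 1: "ln (ra ?M + rb ?M) \<le> ln 4 + ln (norm ?M)" .
  have "ln 3 * H p (ra ?M / rb ?M) \<le> ln 3 * Hb p"
    using H_le[OF p] by (intro mult_left_mono) auto
  then show ?thesis using 1 unfolding Pot_def by linarith
qed

lemma norm_Sprod_pos: "0 < norm (Sprod es)"
proof -
  have "0 < ra (Sprod es) + rb (Sprod es)" using Sprod_pos[of es] by simp
  then show ?thesis using rab_le_norm[of "Sprod es"] by linarith
qed

lemma drift_norm:
  assumes p: "0 < p" "p < 1"
  shows "p * ln (norm (Sprod (es @ [True]))) + (1 - p) * ln (norm (Sprod (es @ [False])))
     \<le> ln (norm (Sprod es)) + p * ln 3 / 2"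
proof -
  let ?M = "Sprod es"
  have "ln (norm (Sprod (es @ [True]))) \<le> ln (sqrt 3 * norm ?M)"
    using norm_Y1[of ?M] norm_Sprod_pos[of "es @ [True]"] norm_Sprod_pos[of es]
    by (subst ln_le_cancel_iff) (auto simp: Sprod_snoc)
  also have "\<dots> = ln 3 / 2 + ln (norm ?M)"
    using norm_Sprod_pos[of es] by (simp add: ln_mult ln_sqrt)
  finally have 1: "p * ln (norm (Sprod (es @ [True]))) \<le> p * (ln 3 / 2 + ln (norm ?M))"
    using p by (intro mult_left_mono) auto
  have 2: "ln (norm (Sprod (es @ [False]))) = ln (norm ?M)" by (simp add: Sprod_snoc norm_Y0)
  show ?thesis using 1 unfolding 2 by (simp add: algebra_simps)
qed

lemma eln_E: "exp_log_norm p n = E p n (\<lambda>es. ln (norm (Sprod es)))"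
  by (simp add: exp_log_norm_def E_def)

lemma subadd:
  assumes p: "0 < p" "p < 1"
  shows "exp_log_norm p (m + n) \<le> exp_log_norm p m + exp_log_norm p n"
proof -
  have "exp_log_norm p (m + n) = E p m (\<lambda>xs. E p n (\<lambda>ys. ln (norm (Sprod (xs @ ys)))))"
    unfolding eln_E E_add ..
  also have "\<dots> \<le> E p m (\<lambda>xs. E p n (\<lambda>ys. ln (norm (Sprod ys)) + ln (norm (Sprod xs))))"
  proof (intro E_mono)
    fix xs ys
    have "ln (norm (Sprod (xs @ ys))) \<le> ln (norm (Sprod ys) * norm (Sprod xs))"
      using norm_mult_le[of "Sprod ys" "Sprod xs"] norm_Sprod_pos[of "xs @ ys"]
        norm_Sprod_pos[of xs] norm_Sprod_pos[of ys]
      by (subst ln_le_cancel_iff) (auto simp: Sprod_append)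
    also have "\<dots> = ln (norm (Sprod ys)) + ln (norm (Sprod xs))"
      using norm_Sprod_pos[of xs] norm_Sprod_pos[of ys] by (simp add: ln_mult)
    finally show "ln (norm (Sprod (xs @ ys))) \<le> ln (norm (Sprod ys)) + ln (norm (Sprod xs))" .
  qed (use p in auto)
  also have "\<dots> = E p m (\<lambda>xs. exp_log_norm p n + ln (norm (Sprod xs)))"
    by (simp add: E_plus_const E_const1 eln_E)
  also have "\<dots> = exp_log_norm p m + exp_log_norm p n"
    by (simp add: E_add_fun E_const eln_E add.commute)
  finally show ?thesis .
qed

lemma upper_n:
  assumes p: "0 < p" "p < 1"
  shows "exp_log_norm p n \<le> ln (norm (Sprod [])) + real n * (p * ln 3 / 2)"
  unfolding eln_E
  by (rule drift_upper) (use p drift_norm[OF p] in auto)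

lemma lower_n:
  assumes p: "0 < p" "p < 1"
  shows "Pot p (Sprod []) - ln 4 - ln 3 * Hb p + real n * (ln 3 * kap p) \<le> exp_log_norm p n"
proof -
  have "Pot p (Sprod []) + real n * (ln 3 * kap p) \<le> E p n (\<lambda>es. Pot p (Sprod es))"
    by (rule drift_lower) (use p drift_Pot[OF p] in auto)
  also have "\<dots> \<le> E p n (\<lambda>es. ln (norm (Sprod es)) + (ln 4 + ln 3 * Hb p))"
    by (rule E_mono) (use p ln_norm_ge_Pot[OF p] in \<open>auto simp: algebra_simps\<close>)
  also have "\<dots> = exp_log_norm p n + (ln 4 + ln 3 * Hb p)"
    by (simp add: E_plus_const E_const1 eln_E)
  finally show ?thesis by linarith
qed

theorem theorem3p3:
  fixes p :: real
  assumes "0 < p" and "p < 1"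
  shows "\<exists>lam. (\<lambda>n. exp_log_norm p n / real n) \<longlonglongrightarrow> lam
           \<and> p * ln 3 / (4 - p) \<le> lam \<and> lam \<le> p * ln 3 / 2"
proof -
  note p = assms
  define C1 where "C1 = Pot p (Sprod []) - ln 4 - ln 3 * Hb p"
  define C2 where "C2 = ln (norm (Sprod []))"
  define k where "k = ln 3 * kap p"
  define u where "u = p * ln 3 / 2"
  have lo: "C1 / real n + k \<le> exp_log_norm p n / real n" if "n \<ge> 1" for n
  proof -
    have "C1 + real n * k \<le> exp_log_norm p n" using lower_n[OF p, of n] unfolding C1_def k_def .
    then have "(C1 + real n * k) / real n \<le> exp_log_norm p n / real n"
      by (rule divide_right_mono) simp
    moreover have "(C1 + real n * k) / real n = C1 / real n + k" using that by (simp add: add_divide_distrib)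
    ultimately show ?thesis by simp
  qed
  have hi: "exp_log_norm p n / real n \<le> C2 / real n + u" if "n \<ge> 1" for n
  proof -
    have "exp_log_norm p n \<le> C2 + real n * u" using upper_n[OF p, of n] unfolding C2_def u_def .
    then have "exp_log_norm p n / real n \<le> (C2 + real n * u) / real n"
      by (rule divide_right_mono) simp
    moreover have "(C2 + real n * u) / real n = C2 / real n + u" using that by (simp add: add_divide_distrib)
    ultimately show ?thesis by simp
  qed
  have "convergent (\<lambda>n. exp_log_norm p n / real n)"
  proof (rule fekete)
    show "exp_log_norm p (m + n) \<le> exp_log_norm p m + exp_log_norm p n" for m n
      by (rule subadd[OF p])
    show "- \<bar>C1\<bar> + k \<le> exp_log_norm p n / real n" if "n \<ge> 1" for n
    proof -
      have "- \<bar>C1\<bar> \<le> C1 / real n"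
      proof (cases "C1 \<ge> 0")
        case True
        then have "0 \<le> C1 / real n" by simp
        then show ?thesis using True by linarith
      next
        case False
        have "\<bar>C1 / real n\<bar> = \<bar>C1\<bar> / real n" by simp
        also have "\<dots> \<le> \<bar>C1\<bar>"
        proof -
          have "\<bar>C1\<bar> * 1 \<le> \<bar>C1\<bar> * real n" using that by (intro mult_left_mono) auto
          then show ?thesis using that by (simp add: divide_le_eq)
        qed
        finally show ?thesis by linarith
      qed
      then show ?thesis using lo[OF that] by linarith
    qed
  qed
  then obtain lam where lam: "(\<lambda>n. exp_log_norm p n / real n) \<longlonglongrightarrow> lam"
    unfolding convergent_def by blast
  have t1: "(\<lambda>n. C1 / real n + k) \<longlonglongrightarrow> 0 + k"
    by (intro tendsto_intros)
  have t2: "(\<lambda>n. C2 / real n + u) \<longlonglongrightarrow> 0 + u"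
    by (intro tendsto_intros)
  have "k \<le> lam"
    using LIMSEQ_le[OF t1 lam] lo by auto
  moreover have "lam \<le> u"
    using LIMSEQ_le[OF lam t2] hi by auto
  moreover have "k = p * ln 3 / (4 - p)" unfolding k_def kap_def by simp
  ultimately show ?thesis using lam unfolding u_def by auto
qed

end
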